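(* Let $V$ be an $n$-dimensional left vector space over a division ring $R$ ($4\le n<\infty$), and let $n,k,l,m$ satisfy $l\ge 4$, $1<k<n-1$, $1<m<l-1$ and $\min\{m,l-m\}\le\min\{k,n-k\}$. Let $\mathcal J$ be the image of an isometric embedding of the Johnson graph $J(l,m)$ in the Grassmann graph $\Gamma_k(V)$, and let $\Gamma(\mathcal J)$ be the restriction (induced subgraph) of $\Gamma_k(V)$ to $\mathcal J$. Then every maximal clique of $\Gamma(\mathcal J)$ is contained in precisely one maximal clique of $\Gamma_k(V)$.
   Context: $\mathcal G_k(V)$ is the set of $k$-dimensional subspaces of $V$. The Grassmann graph $\Gamma_k(V)$ has vertex set $\mathcal G_k(V)$, two vertices being adjacent if their intersection is $(k-1)$-dimensional. The Johnson graph $J(l,m)$ has as vertices the $m$-element subsets of an $l$-element set, two being adjacent if they meet in $m-1$ elements. An isometric embedding is an injective map of vertex sets preserving graph distance. *)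

theory Defs
  imports Main
begin

text \<open>An n-dimensional left vector space over a division ring R is modelled (up to
  isomorphism) as the coordinate space R^n: functions nat => R vanishing outside {..<n},
  with left scalar multiplication c * v i.\<close>

definition coord_space :: "nat \<Rightarrow> (nat \<Rightarrow> 'a::division_ring) set" where
  "coord_space n = {v. \<forall>i\<ge>n. v i = 0}"

definition lspan :: "(nat \<Rightarrow> 'a::division_ring) set \<Rightarrow> (nat \<Rightarrow> 'a) set" where
  "lspan S = {(\<lambda>j. \<Sum>v\<in>F. c v * v j) | F c. finite F \<and> F \<subseteq> S}"

definition lindep_free :: "(nat \<Rightarrow> 'a::division_ring) set \<Rightarrow> bool" where
  "lindep_free S \<longleftrightarrow> (\<forall>F c. finite F \<and> F \<subseteq> S \<and> (\<forall>j. (\<Sum>v\<in>F. c v * v j) = 0)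
      \<longrightarrow> (\<forall>v\<in>F. c v = 0))"

definition has_dim :: "(nat \<Rightarrow> 'a::division_ring) set \<Rightarrow> nat \<Rightarrow> bool" where
  "has_dim U d \<longleftrightarrow> (\<exists>B. finite B \<and> card B = d \<and> lindep_free B \<and> lspan B = U)"

definition grass :: "nat \<Rightarrow> nat \<Rightarrow> (nat \<Rightarrow> 'a::division_ring) set set" where
  "grass n k = {U. U \<subseteq> coord_space n \<and> has_dim U k}"

definition grass_adj :: "nat \<Rightarrow> (nat \<Rightarrow> 'a::division_ring) set \<Rightarrow> (nat \<Rightarrow> 'a) set \<Rightarrow> bool" where
  "grass_adj k X Y \<longleftrightarrow> has_dim (X \<inter> Y) (k - 1)"

definition johnson :: "nat \<Rightarrow> nat \<Rightarrow> nat set set" where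
  "johnson l m = {A. A \<subseteq> {..<l} \<and> card A = m}"

definition johnson_adj :: "nat \<Rightarrow> nat set \<Rightarrow> nat set \<Rightarrow> bool" where
  "johnson_adj m A B \<longleftrightarrow> card (A \<inter> B) = m - 1"

text \<open>Graphs given by a vertex set and an adjacency relation.
  Graph distance: least length of a walk (all graphs used here are connected).\<close>
definition gdist :: "'v set \<Rightarrow> ('v \<Rightarrow> 'v \<Rightarrow> bool) \<Rightarrow> 'v \<Rightarrow> 'v \<Rightarrow> nat" where
  "gdist Vs adj x y = (LEAST d. \<exists>p::nat \<Rightarrow> 'v. p 0 = x \<and> p d = y \<and>
       (\<forall>i\<le>d. p i \<in> Vs) \<and> (\<forall>i<d. adj (p i) (p (Suc i))))"

definition isometric_embedding ::
  "'v set \<Rightarrow> ('v \<Rightarrow> 'v \<Rightarrow> bool) \<Rightarrow> 'w set \<Rightarrow> ('w \<Rightarrow> 'w \<Rightarrow> bool) \<Rightarrow> ('v \<Rightarrow> 'w) \<Rightarrow> bool" where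
  "isometric_embedding V1 adj1 V2 adj2 f \<longleftrightarrow>
     inj_on f V1 \<and> f ` V1 \<subseteq> V2 \<and>
     (\<forall>x\<in>V1. \<forall>y\<in>V1. gdist V2 adj2 (f x) (f y) = gdist V1 adj1 x y)"

definition clique :: "'v set \<Rightarrow> ('v \<Rightarrow> 'v \<Rightarrow> bool) \<Rightarrow> 'v set \<Rightarrow> bool" where
  "clique Vs adj C \<longleftrightarrow> C \<subseteq> Vs \<and> (\<forall>x\<in>C. \<forall>y\<in>C. x \<noteq> y \<longrightarrow> adj x y)"

definition maximal_clique :: "'v set \<Rightarrow> ('v \<Rightarrow> 'v \<Rightarrow> bool) \<Rightarrow> 'v set \<Rightarrow> bool" where
  "maximal_clique Vs adj C \<longleftrightarrow> clique Vs adj C \<and> (\<forall>D. clique Vs adj D \<and> C \<subseteq> D \<longrightarrow> D = C)"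

end

theory Submission imports Defs begin


definition lc :: "((nat \<Rightarrow> 'a::division_ring) \<Rightarrow> 'a) \<Rightarrow> (nat \<Rightarrow> 'a) set \<Rightarrow> nat \<Rightarrow> 'a" where
  "lc c F = (\<lambda>j. \<Sum>v\<in>F. c v * v j)"

definition subsp :: "(nat \<Rightarrow> 'a::division_ring) set \<Rightarrow> bool" where
  "subsp U \<longleftrightarrow> (\<lambda>j. 0) \<in> U \<and> (\<forall>u\<in>U. \<forall>w\<in>U. (\<lambda>j. u j + w j) \<in> U) \<and> (\<forall>c. \<forall>u\<in>U. (\<lambda>j. c * u j) \<in> U)"

lemma lspan_lc: "lspan S = {lc c F | F c. finite F \<and> F \<subseteq> S}"
  unfolding lspan_def lc_def by simp

lemma lspanI: "finite F \<Longrightarrow> F \<subseteq> S \<Longrightarrow> lc c F \<in> lspan S"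
  unfolding lspan_lc by blast

lemma lspanE: assumes "x \<in> lspan S" obtains F c where "finite F" "F \<subseteq> S" "lc c F = x"
  using assms unfolding lspan_lc by blast

lemma lc_empty[simp]: "lc c {} = (\<lambda>j. 0)" by (simp add: lc_def)
lemma lc_insert: "finite F \<Longrightarrow> v \<notin> F \<Longrightarrow> lc c (insert v F) = (\<lambda>j. c v * v j + lc c F j)"
  by (simp add: lc_def)

lemma subsp_lc: assumes "subsp U" "finite F" "F \<subseteq> U" shows "lc c F \<in> U"
  using assms(2,3)
proof (induction F rule: finite_induct)
  case empty then show ?case using assms(1) by (simp add: subsp_def)
next
  case (insert x F)
  then have "lc c F \<in> U" "x \<in> U" by auto
  then have "(\<lambda>j. c x * x j) \<in> U" using assms(1) by (simp add: subsp_def)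
  moreover have "\<forall>u\<in>U. \<forall>w\<in>U. (\<lambda>j. u j + w j) \<in> U" using assms(1) unfolding subsp_def by blast
  ultimately have "(\<lambda>j. c x * x j + lc c F j) \<in> U" using \<open>lc c F \<in> U\<close> by fastforce
  then show ?case using insert by (simp add: lc_insert)
qed

lemma lc_add: assumes "finite F1" "finite F2"
  shows "(\<lambda>j. lc c1 F1 j + lc c2 F2 j) = lc (\<lambda>v. (if v \<in> F1 then c1 v else 0) + (if v \<in> F2 then c2 v else 0)) (F1 \<union> F2)"
proof
  fix j
  have "lc (\<lambda>v. (if v \<in> F1 then c1 v else 0) + (if v \<in> F2 then c2 v else 0)) (F1 \<union> F2) j
     = (\<Sum>v\<in>F1\<union>F2. (if v \<in> F1 then c1 v * v j else 0)) + (\<Sum>v\<in>F1\<union>F2. (if v \<in> F2 then c2 v * v j else 0))"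
    unfolding lc_def sum.distrib[symmetric] by (rule sum.cong) (auto simp: distrib_right)
  also have "\<dots> = lc c1 F1 j + lc c2 F2 j"
  proof -
    have "(\<Sum>v\<in>F1\<union>F2. (if v \<in> F1 then c1 v * v j else 0)) = (\<Sum>v\<in>(F1\<union>F2)\<inter>F1. c1 v * v j)"
      using assms sum.inter_restrict[of "F1\<union>F2" "\<lambda>v. c1 v * v j" F1] by auto
    moreover have "(\<Sum>v\<in>F1\<union>F2. (if v \<in> F2 then c2 v * v j else 0)) = (\<Sum>v\<in>(F1\<union>F2)\<inter>F2. c2 v * v j)"
      using assms sum.inter_restrict[of "F1\<union>F2" "\<lambda>v. c2 v * v j" F2] by auto
    moreover have "(F1\<union>F2)\<inter>F1 = F1" "(F1\<union>F2)\<inter>F2 = F2" by auto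
    ultimately show ?thesis by (simp add: lc_def)
  qed
  finally show "lc c1 F1 j + lc c2 F2 j = lc (\<lambda>v. (if v \<in> F1 then c1 v else 0) + (if v \<in> F2 then c2 v else 0)) (F1 \<union> F2) j" by simp
qed

lemma lc_smult: "(\<lambda>j. a * lc c F j) = lc (\<lambda>v. a * c v) F"
  by (simp add: lc_def sum_distrib_left mult.assoc)

lemma subsp_lspan: "subsp (lspan S)"
  unfolding subsp_def
proof (intro conjI ballI allI)
  show "(\<lambda>j. 0) \<in> lspan S" unfolding lspan_lc by (rule CollectI, rule exI[of _ "{}"]) auto
next
  fix u w assume "u \<in> lspan S" "w \<in> lspan S"
  then obtain F1 c1 F2 c2 where "u = lc c1 F1" "finite F1" "F1 \<subseteq> S" "w = lc c2 F2" "finite F2" "F2 \<subseteq> S"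
    unfolding lspan_lc by auto
  then show "(\<lambda>j. u j + w j) \<in> lspan S" unfolding lspan_lc by (simp add: lc_add) blast
next
  fix a u assume "u \<in> lspan S"
  then obtain F c where "finite F" "F \<subseteq> S" "lc c F = u" by (rule lspanE)
  moreover have "(\<lambda>j. a * lc c F j) = lc (\<lambda>v. a * c v) F" by (rule lc_smult)
  ultimately show "(\<lambda>j. a * u j) \<in> lspan S" using lspanI by metis
qed

lemma lspan_least: assumes "subsp U" "S \<subseteq> U" shows "lspan S \<subseteq> U"
proof
  fix x assume "x \<in> lspan S"
  then obtain F c where "finite F" "F \<subseteq> S" "lc c F = x" by (rule lspanE)
  then show "x \<in> U" using subsp_lc[OF assms(1), of F c] assms(2) by blast
qed

lemma lspan_sup: "S \<subseteq> lspan S"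
proof
  fix v assume "v \<in> S"
  have "lc (\<lambda>_. 1) {v} = v" by (simp add: lc_def)
  moreover have "lc (\<lambda>_. 1) {v} \<in> lspan S" using \<open>v \<in> S\<close> by (intro lspanI) auto
  ultimately show "v \<in> lspan S" by simp
qed

lemma lspan_mono: "S \<subseteq> T \<Longrightarrow> lspan S \<subseteq> lspan T"
  by (metis lspanE lspanI order_trans subsetI)

lemma lspan_subsp_eq: "subsp U \<Longrightarrow> lspan U = U"
  using lspan_least lspan_sup by blast

lemma lspan_lspan[simp]: "lspan (lspan S) = lspan S"
  by (rule lspan_subsp_eq[OF subsp_lspan])

lemma lspan_sub_iff: "lspan S \<subseteq> lspan T \<longleftrightarrow> S \<subseteq> lspan T"
proof
  assume "lspan S \<subseteq> lspan T" then show "S \<subseteq> lspan T" using lspan_sup[of S] by blast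
next
  assume "S \<subseteq> lspan T" then show "lspan S \<subseteq> lspan T" using lspan_least[OF subsp_lspan] by blast
qed

lemma subsp_Int: "subsp U \<Longrightarrow> subsp W \<Longrightarrow> subsp (U \<inter> W)"
  unfolding subsp_def by blast

lemma subsp_zero: "subsp U \<Longrightarrow> (\<lambda>j. 0) \<in> U" unfolding subsp_def by blast

lemma lindep_free_subset: "lindep_free A \<Longrightarrow> B \<subseteq> A \<Longrightarrow> lindep_free B"
  unfolding lindep_free_def by blast

lemma lindep_free_lc: "lindep_free A \<Longrightarrow> finite F \<Longrightarrow> F \<subseteq> A \<Longrightarrow> lc c F = (\<lambda>j. 0) \<Longrightarrow> v \<in> F \<Longrightarrow> c v = 0"
proof -
  assume a: "lindep_free A" "finite F" "F \<subseteq> A" "lc c F = (\<lambda>j. 0)" "v \<in> F"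
  then have "\<forall>j. (\<Sum>v\<in>F. c v * v j) = 0" unfolding lc_def by (metis)
  then show "c v = 0" using a unfolding lindep_free_def by blast
qed

lemma indep_not_in_span:
  assumes "lindep_free A" "a \<in> A" shows "a \<notin> lspan (A - {a})"
proof
  assume "a \<in> lspan (A - {a})"
  then obtain F c where F: "lc c F = a" "finite F" "F \<subseteq> A - {a}" unfolding lspan_lc by blast
  define c' where "c' = c(a := -1)"
  have aF: "a \<notin> F" using F(3) by blast
  have "lc c' (insert a F) = (\<lambda>j. c' a * a j + lc c' F j)" using F(2) aF by (rule lc_insert)
  also have "lc c' F = lc c F" unfolding lc_def c'_def using aF by (intro ext sum.cong) auto
  also have "\<dots> = a" by (rule F(1))
  also have "(\<lambda>j. c' a * a j + a j) = (\<lambda>j. 0)" by (simp add: c'_def)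
  finally have eq: "lc c' (insert a F) = (\<lambda>j. 0)" .
  have sub: "insert a F \<subseteq> A" using F(3) assms(2) by blast
  have fin: "finite (insert a F)" using F(2) by simp
  have "c' a = 0" by (rule lindep_free_lc[OF assms(1) fin sub eq insertI1])
  then show False by (simp add: c'_def)
qed

lemma indep_insert:
  assumes "lindep_free S" "b \<notin> lspan S" shows "lindep_free (insert b S)"
  unfolding lindep_free_def
proof (intro allI impI)
  fix F c assume H: "finite F \<and> F \<subseteq> insert b S \<and> (\<forall>j. (\<Sum>v\<in>F. c v * v j) = 0)"
  show "\<forall>v\<in>F. c v = 0"
  proof (cases "b \<in> F")
    case False
    then have "F \<subseteq> S" using H by auto
    then show ?thesis using H assms(1) unfolding lindep_free_def by blast
  next
    case True
    define F0 where "F0 = F - {b}"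
    have F0: "finite F0" "F0 \<subseteq> S" "b \<notin> F0" "F = insert b F0" using H True by (auto simp: F0_def)
    have eq: "\<And>j. c b * b j + lc c F0 j = 0" using H F0 by (simp add: lc_def)
    have cb: "c b = 0"
    proof (rule ccontr)
      assume nz: "c b \<noteq> 0"
      have "b = (\<lambda>j. (- inverse (c b)) * lc c F0 j)"
      proof
        fix j
        have "c b * b j = - lc c F0 j" using eq[of j] by (simp add: eq_neg_iff_add_eq_0)
        then have "inverse (c b) * (c b * b j) = inverse (c b) * (- lc c F0 j)" by simp
        then show "b j = (- inverse (c b)) * lc c F0 j" using nz by (simp add: mult.assoc[symmetric])
      qed
      also have "\<dots> = lc (\<lambda>v. (- inverse (c b)) * c v) F0" by (rule lc_smult)
      also have "\<dots> \<in> lspan S" unfolding lspan_lc using F0 by blast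
      finally show False using assms(2) by simp
    qed
    then have "\<forall>j. (\<Sum>v\<in>F0. c v * v j) = 0" using eq by (simp add: lc_def)
    then have "\<forall>v\<in>F0. c v = 0" using assms(1) F0 unfolding lindep_free_def by blast
    then show ?thesis using cb F0 by auto
  qed
qed



lemma steinitz:
  assumes "finite B" shows "finite A \<Longrightarrow> lindep_free A \<Longrightarrow> A \<subseteq> lspan B \<Longrightarrow> card A \<le> card B"
proof (induction "card (A - B)" arbitrary: A rule: less_induct)
  case less
  show ?case
  proof (cases "A \<subseteq> B")
    case True then show ?thesis using assms card_mono by blast
  next
    case False
    then obtain a where a: "a \<in> A" "a \<notin> B" by blast
    have na: "a \<notin> lspan (A - {a})" using indep_not_in_span less.prems a by blast
    have "\<not> B \<subseteq> lspan (A - {a})"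
    proof
      assume "B \<subseteq> lspan (A - {a})"
      then have "lspan B \<subseteq> lspan (A - {a})" by (simp add: lspan_sub_iff)
      then show False using less.prems(3) a na by blast
    qed
    then obtain b where b: "b \<in> B" "b \<notin> lspan (A - {a})" by (meson subsetI)
    have bA: "b \<notin> A - {a}" using b(2) lspan_sup[of "A - {a}"] by blast
    define A' where "A' = insert b (A - {a})"
    have ind: "lindep_free A'" unfolding A'_def
      by (rule indep_insert[OF lindep_free_subset[OF less.prems(2)] b(2)]) auto
    have fin: "finite A'" using less.prems(1) A'_def by simp
    have sub: "A' \<subseteq> lspan B" using less.prems(3) b(1) lspan_sup A'_def by blast
    have cA: "card A' = card A" unfolding A'_def using bA less.prems(1) a(1)
      by (simp add: card_insert_if) (metis Suc_pred card_gt_0_iff empty_iff)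
    have "A' - B = (A - B) - {a}" unfolding A'_def using b(1) by blast
    then have "card (A' - B) < card (A - B)" using a less.prems(1)
      by (metis Diff_iff card_Diff1_less finite_Diff)
    then have "card A' \<le> card B" using less.hyps fin ind sub by blast
    then show ?thesis using cA by simp
  qed
qed

lemma ext_basis:
  assumes "subsp W" "W \<subseteq> lspan B0" "finite B0"
  shows "finite C \<Longrightarrow> C \<subseteq> W \<Longrightarrow> lindep_free C \<Longrightarrow>
    \<exists>D. C \<subseteq> D \<and> D \<subseteq> W \<and> finite D \<and> lindep_free D \<and> lspan D = W"
proof (induction "card B0 - card C" arbitrary: C rule: less_induct)
  case less
  show ?case
  proof (cases "lspan C = W")
    case True then show ?thesis using less.prems by blast
  next
    case False
    have "lspan C \<subseteq> W" using lspan_least[OF assms(1) less.prems(2)] .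
    then obtain v where v: "v \<in> W" "v \<notin> lspan C" using False by blast
    have vC: "v \<notin> C" using v lspan_sup by blast
    have ind: "lindep_free (insert v C)" by (rule indep_insert[OF less.prems(3) v(2)])
    have sub: "insert v C \<subseteq> W" using v less.prems by blast
    have fin: "finite (insert v C)" using less.prems by simp
    have "card (insert v C) \<le> card B0"
      using steinitz[OF assms(3) fin ind] sub assms(2) by blast
    then have "card B0 - card (insert v C) < card B0 - card C" using vC less.prems(1) by simp
    then obtain D where "insert v C \<subseteq> D \<and> D \<subseteq> W \<and> finite D \<and> lindep_free D \<and> lspan D = W"
      using less.hyps[OF _ fin sub ind] by blast
    then show ?thesis by blast
  qed
qed

lemma hd_subsp: "has_dim U d \<Longrightarrow> subsp U"
  unfolding has_dim_def using subsp_lspan by blast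

lemma hd_unique: assumes "has_dim U d" "has_dim U e" shows "d = e"
proof -
  obtain B where B: "finite B" "card B = d" "lindep_free B" "lspan B = U" using assms(1) unfolding has_dim_def by blast
  obtain B' where B': "finite B'" "card B' = e" "lindep_free B'" "lspan B' = U" using assms(2) unfolding has_dim_def by blast
  have "e \<le> d" using steinitz[OF B(1) B'(1) B'(3)] B B' lspan_sup by blast
  moreover have "d \<le> e" using steinitz[OF B'(1) B(1) B(3)] B B' lspan_sup by blast
  ultimately show ?thesis by simp
qed

lemma hd_basis: "finite B \<Longrightarrow> lindep_free B \<Longrightarrow> has_dim (lspan B) (card B)"
  unfolding has_dim_def by blast

lemma sub_dim:
  assumes "has_dim U d" "subsp W" "W \<subseteq> U"
  shows "\<exists>e. has_dim W e \<and> e \<le> d \<and> (e = d \<longrightarrow> W = U)"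
proof -
  obtain B where B: "finite B" "card B = d" "lindep_free B" "lspan B = U" using assms(1) unfolding has_dim_def by blast
  obtain D where D: "D \<subseteq> W" "finite D" "lindep_free D" "lspan D = W"
    using ext_basis[OF assms(2) _ B(1), of "{}"] assms(3) B(4) unfolding lindep_free_def by auto
  have le: "card D \<le> d" using steinitz[OF B(1) D(2) D(3)] D(1) assms(3) B by blast
  have "card D = d \<longrightarrow> W = U"
  proof
    assume cd: "card D = d"
    obtain D' where D': "D \<subseteq> D'" "D' \<subseteq> U" "finite D'" "lindep_free D'" "lspan D' = U"
      using ext_basis[OF hd_subsp[OF assms(1)] _ B(1) D(2)] D(1) assms(3) B(4) D(3) by blast
    have "card D' \<le> d" using steinitz[OF B(1) D'(3) D'(4)] D'(2) B by blast
    then have "D = D'" using card_subset_eq[OF D'(3) D'(1)] cd card_mono[OF D'(3) D'(1)] by simp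
    then show "W = U" using D(4) D'(5) by simp
  qed
  then show ?thesis using le D hd_basis by metis
qed

lemma ext_to_basis:
  assumes "has_dim U d" "finite C" "C \<subseteq> U" "lindep_free C"
  shows "\<exists>A. A \<inter> C = {} \<and> finite A \<and> lindep_free (C \<union> A) \<and> lspan (C \<union> A) = U \<and> card C + card A = d"
proof -
  obtain B where B: "finite B" "card B = d" "lindep_free B" "lspan B = U" using assms(1) unfolding has_dim_def by blast
  obtain D where D: "C \<subseteq> D" "D \<subseteq> U" "finite D" "lindep_free D" "lspan D = U"
    using ext_basis[OF hd_subsp[OF assms(1)] _ B(1) assms(2,3,4)] B(4) by blast
  have cd: "card D = d" using hd_unique[OF hd_basis[OF D(3,4)] ] D(5) assms(1) by simp
  have e: "C \<union> (D - C) = D" using D(1) by blast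
  have cc: "card C + card (D - C) = card D" using D(1,3) card_Diff_subset[of C D] card_mono[of D C]
    by (metis add_diff_inverse_nat assms(2) card_mono not_less)
  show ?thesis
  proof (intro exI[of _ "D - C"] conjI)
    show "(D - C) \<inter> C = {}" by blast
    show "finite (D - C)" using D(3) by simp
    show "lindep_free (C \<union> (D - C))" using e D(4) by simp
    show "lspan (C \<union> (D - C)) = U" using e D(5) by simp
    show "card C + card (D - C) = d" using cc cd by simp
  qed
qed



definition fdim :: "(nat \<Rightarrow> 'a::division_ring) set \<Rightarrow> bool" where
  "fdim U \<longleftrightarrow> (\<exists>d. has_dim U d)"
definition dim :: "(nat \<Rightarrow> 'a::division_ring) set \<Rightarrow> nat" where
  "dim U = (THE d. has_dim U d)"

lemma hd_dim: "has_dim U d \<Longrightarrow> dim U = d"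
  unfolding dim_def using hd_unique by blast

lemma fdim_hd: "fdim U \<Longrightarrow> has_dim U (dim U)"
  unfolding fdim_def using hd_dim by metis

lemma hd_fdim: "has_dim U d \<Longrightarrow> fdim U" unfolding fdim_def by blast

lemma fdim_subsp: "fdim U \<Longrightarrow> subsp U" unfolding fdim_def using hd_subsp by blast

lemma sub_fdim: assumes "fdim U" "subsp W" "W \<subseteq> U"
  shows "fdim W \<and> dim W \<le> dim U \<and> (dim W = dim U \<longrightarrow> W = U)"
proof -
  obtain e where "has_dim W e" "e \<le> dim U" "e = dim U \<longrightarrow> W = U"
    using sub_dim[OF fdim_hd[OF assms(1)] assms(2,3)] by blast
  then show ?thesis using hd_dim hd_fdim by metis
qed

lemma sub_lt: assumes "fdim U" "subsp W" "W \<subseteq> U" "W \<noteq> U" shows "dim W < dim U"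
  using sub_fdim[OF assms(1-3)] assms(4) by linarith

lemma ds2:
  assumes "lindep_free (P \<union> Q)" "P \<inter> Q = {}" "x \<in> lspan P" "x \<in> lspan Q"
  shows "x = (\<lambda>j. 0)"
proof -
  obtain F1 c1 where F1: "finite F1" "F1 \<subseteq> P" "lc c1 F1 = x" using assms(3) by (rule lspanE)
  obtain F2 c2 where F2: "finite F2" "F2 \<subseteq> Q" "lc c2 F2 = x" using assms(4) by (rule lspanE)
  have dis: "F1 \<inter> F2 = {}" using F1 F2 assms(2) by blast
  define c where "c v = (if v \<in> F1 then c1 v else - c2 v)" for v
  have "lc c (F1 \<union> F2) = (\<lambda>j. 0)"
  proof
    fix j
    have "lc c (F1 \<union> F2) j = (\<Sum>v\<in>F1. c v * v j) + (\<Sum>v\<in>F2. c v * v j)"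
      unfolding lc_def using F1(1) F2(1) dis by (simp add: sum.union_disjoint)
    also have "(\<Sum>v\<in>F1. c v * v j) = x j" unfolding c_def using F1(3) unfolding lc_def by (auto intro: sum.cong)
    also have "(\<Sum>v\<in>F2. c v * v j) = (\<Sum>v\<in>F2. - (c2 v * v j))"
      using dis unfolding c_def by (intro sum.cong) auto
    also have "\<dots> = - x j" using F2(3) unfolding lc_def by (auto simp: sum_negf)
    finally show "lc c (F1 \<union> F2) j = 0" by simp
  qed
  then have z: "\<And>v. v \<in> F1 \<Longrightarrow> c v = 0"
    using lindep_free_lc[OF assms(1), of "F1 \<union> F2" c] F1 F2 by blast
  have "lc c1 F1 = (\<lambda>j. 0)" unfolding lc_def using z unfolding c_def by (auto intro: sum.neutral)
  then show ?thesis using F1(3) by simp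
qed

lemma ds1:
  assumes "lindep_free P" "lindep_free Q" "P \<inter> Q = {}"
    and z: "\<And>x. x \<in> lspan P \<Longrightarrow> x \<in> lspan Q \<Longrightarrow> x = (\<lambda>j. 0)"
  shows "lindep_free (P \<union> Q)"
  unfolding lindep_free_def
proof (intro allI impI)
  fix F c assume H: "finite F \<and> F \<subseteq> P \<union> Q \<and> (\<forall>j. (\<Sum>v\<in>F. c v * v j) = 0)"
  define F1 where "F1 = F \<inter> P"
  define F2 where "F2 = F \<inter> Q"
  have FF1: "F = F1 \<union> F2" using H unfolding F1_def F2_def by blast
  have FF2: "F1 \<inter> F2 = {}" using assms(3) unfolding F1_def F2_def by blast
  have FF3: "finite F1" "finite F2" using H unfolding F1_def F2_def by simp_all
  have FF4: "F1 \<subseteq> P" "F2 \<subseteq> Q" unfolding F1_def F2_def by blast+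
  note FF = FF1 FF2 FF3 FF4
  have s0: "(\<Sum>v\<in>F. c v * v j) = lc c F1 j + lc c F2 j" for j
    unfolding lc_def FF1 by (rule sum.union_disjoint[OF FF3 FF2])
  have s: "\<And>j. lc c F1 j + lc c F2 j = 0" using H s0 by metis
  have "lc c F1 = lc (\<lambda>v. - c v) F2"
  proof
    fix j show "lc c F1 j = lc (\<lambda>v. - c v) F2 j"
      using s[of j] unfolding lc_def by (simp add: sum_negf eq_neg_iff_add_eq_0)
  qed
  then have "lc c F1 = (\<lambda>j. 0)" using z lspanI FF by metis
  then have z1: "\<forall>v\<in>F1. c v = 0" using lindep_free_lc[OF assms(1)] FF by blast
  have "lc c F2 = (\<lambda>j. 0)" using s \<open>lc c F1 = (\<lambda>j. 0)\<close> by (metis add_0)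
  then have z2: "\<forall>v\<in>F2. c v = 0" using lindep_free_lc[OF assms(2)] FF by blast
  show "\<forall>v\<in>F. c v = 0" using z1 z2 FF by blast
qed

lemma triple_basis:
  assumes "has_dim X a" "has_dim W b"
  shows "\<exists>C A B. finite C \<and> finite A \<and> finite B \<and> C \<inter> A = {} \<and> C \<inter> B = {} \<and> A \<inter> B = {} \<and>
    lindep_free (C \<union> A \<union> B) \<and> lspan C = X \<inter> W \<and> lspan (C \<union> A) = X \<and> lspan (C \<union> B) = W \<and>
    card C + card A = a \<and> card C + card B = b"
proof -
  have sX: "subsp X" "subsp W" using assms hd_subsp by blast+
  obtain e where "has_dim (X \<inter> W) e" using sub_dim[OF assms(1) subsp_Int[OF sX] ] by blast
  then obtain C where C: "finite C" "lindep_free C" "lspan C = X \<inter> W" unfolding has_dim_def by blast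
  have CX: "C \<subseteq> X" "C \<subseteq> W" using C(3) lspan_sup[of C] by blast+
  obtain A where A: "A \<inter> C = {}" "finite A" "lindep_free (C \<union> A)" "lspan (C \<union> A) = X" "card C + card A = a"
    using ext_to_basis[OF assms(1) C(1) CX(1) C(2)] by blast
  obtain B where B: "B \<inter> C = {}" "finite B" "lindep_free (C \<union> B)" "lspan (C \<union> B) = W" "card C + card B = b"
    using ext_to_basis[OF assms(2) C(1) CX(2) C(2)] by blast
  have AB: "A \<inter> B = {}"
  proof (rule ccontr)
    assume "A \<inter> B \<noteq> {}"
    then obtain v where v: "v \<in> A" "v \<in> B" by blast
    have "v \<in> X" using v A(4) lspan_sup[of "C \<union> A"] by blast
    moreover have "v \<in> W" using v B(4) lspan_sup[of "C \<union> B"] by blast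
    ultimately have "v \<in> lspan C" using C(3) by blast
    moreover have "lspan C \<subseteq> lspan ((C \<union> A) - {v})" using v A(1) by (intro lspan_mono) blast
    ultimately show False using indep_not_in_span[OF A(3), of v] v by blast
  qed
  have BW: "lspan B \<subseteq> W" using B(4) lspan_mono[of B "C \<union> B"] by blast
  have ind: "lindep_free (C \<union> A \<union> B)"
  proof (rule ds1[OF A(3) lindep_free_subset[OF B(3)]])
    show "B \<subseteq> C \<union> B" by blast
    show "(C \<union> A) \<inter> B = {}" using AB B(1) by blast
    fix x assume "x \<in> lspan (C \<union> A)" "x \<in> lspan B"
    then have "x \<in> lspan C" using A(4) BW C(3) by blast
    moreover have "C \<inter> B = {}" using B(1) by blast
    ultimately show "x = (\<lambda>j. 0)" using ds2[OF B(3)] \<open>x \<in> lspan B\<close> by blast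
  qed
  have CA: "C \<inter> A = {}" "C \<inter> B = {}" using A(1) B(1) by blast+
  show ?thesis
    by (intro exI[of _ C] exI[of _ A] exI[of _ B] conjI; (rule C A B AB ind CA)?)
qed

lemma dim_formula:
  assumes "has_dim X a" "has_dim W b"
  shows "fdim (lspan (X \<union> W)) \<and> fdim (X \<inter> W) \<and> dim (lspan (X \<union> W)) + dim (X \<inter> W) = a + b"
proof -
  obtain C A B where T: "finite C" "finite A" "finite B" "C \<inter> A = {}" "C \<inter> B = {}" "A \<inter> B = {}"
    "lindep_free (C \<union> A \<union> B)" "lspan C = X \<inter> W" "lspan (C \<union> A) = X" "lspan (C \<union> B) = W"
    "card C + card A = a" "card C + card B = b"
    using triple_basis[OF assms] by blast
  have "X \<union> W \<subseteq> lspan (C \<union> A \<union> B)" using T(9,10) lspan_mono[of "C \<union> A" "C \<union> A \<union> B"] lspan_mono[of "C \<union> B" "C \<union> A \<union> B"] by blast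
  moreover have "C \<union> A \<union> B \<subseteq> lspan (X \<union> W)" using T(9,10) lspan_sup[of "C \<union> A"] lspan_sup[of "C \<union> B"] lspan_sup[of "X \<union> W"] by blast
  ultimately have eq: "lspan (X \<union> W) = lspan (C \<union> A \<union> B)" by (metis lspan_sub_iff subset_antisym)
  have cd: "card (C \<union> A \<union> B) = card C + card A + card B"
    using T(1-6) by (simp add: card_Un_disjoint Int_Un_distrib2)
  have h1: "has_dim (lspan (X \<union> W)) (card C + card A + card B)"
    using hd_basis[of "C \<union> A \<union> B"] T(1-3,7) eq cd by simp
  have h2: "has_dim (X \<inter> W) (card C)" using hd_basis[OF T(1) lindep_free_subset[OF T(7)]] T(8) by auto
  show ?thesis using h1 h2 hd_dim hd_fdim T(11,12) by (metis add.commute add.left_commute)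
qed



lemma hd_sub: "has_dim U d \<Longrightarrow> subsp W \<Longrightarrow> W \<subseteq> U \<Longrightarrow> fdim W \<and> dim W \<le> d \<and> (dim W = d \<longrightarrow> W = U)"
  using sub_fdim[OF hd_fdim] hd_dim by metis

lemma int_sub: assumes "has_dim X a" "has_dim Y b"
  shows "fdim (X \<inter> Y)" "dim (X \<inter> Y) \<le> a" "subsp (X \<inter> Y)"
  using hd_sub[OF assms(1) subsp_Int[OF hd_subsp[OF assms(1)] hd_subsp[OF assms(2)]]] 
    subsp_Int[OF hd_subsp[OF assms(1)] hd_subsp[OF assms(2)]] by auto

lemma int_lt: assumes "has_dim X k" "has_dim Y k" "X \<noteq> Y" shows "dim (X \<inter> Y) < k"
proof -
  have s: "subsp (X \<inter> Y)" using int_sub[OF assms(1,2)] by simp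
  have "dim (X \<inter> Y) \<le> k" using int_sub[OF assms(1,2)] by simp
  moreover have "dim (X \<inter> Y) \<noteq> k"
  proof
    assume "dim (X \<inter> Y) = k"
    then have "X \<inter> Y = X" using hd_sub[OF assms(1) s] by blast
    then have "X \<subseteq> Y" by blast
    then have "X = Y" using hd_sub[OF assms(2) hd_subsp[OF assms(1)]] hd_dim[OF assms(1)] by blast
    then show False using assms(3) by simp
  qed
  ultimately show ?thesis by simp
qed

lemma both_contain:
  assumes "has_dim A k" "has_dim B k" "A \<noteq> B" "has_dim S (k - 1)" "S \<subseteq> A" "S \<subseteq> B" "1 \<le> k"
  shows "dim (A \<inter> B) = k - 1"
proof -
  have "S \<subseteq> A \<inter> B" using assms by blast
  then have "k - 1 \<le> dim (A \<inter> B)"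
    using sub_fdim[OF int_sub(1)[OF assms(1,2)] hd_subsp[OF assms(4)]] hd_dim[OF assms(4)] by metis
  then show ?thesis using int_lt[OF assms(1-3)] by linarith
qed

lemma both_in:
  assumes "has_dim A k" "has_dim B k" "A \<noteq> B" "has_dim T (Suc k)" "A \<subseteq> T" "B \<subseteq> T"
  shows "dim (A \<inter> B) = k - 1"
proof -
  have df: "fdim (lspan (A \<union> B)) \<and> fdim (A \<inter> B) \<and> dim (lspan (A \<union> B)) + dim (A \<inter> B) = k + k"
    by (rule dim_formula[OF assms(1,2)])
  note f = df[THEN conjunct1] df[THEN conjunct2, THEN conjunct2]
  have "lspan (A \<union> B) \<subseteq> T" by (rule lspan_least[OF hd_subsp[OF assms(4)]]) (use assms(5,6) in blast)
  from hd_sub[OF assms(4) subsp_lspan this] have "dim (lspan (A \<union> B)) \<le> Suc k" by (elim conjE)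
  then show ?thesis using f int_lt[OF assms(1-3)] by linarith
qed

lemma sum_dim:
  assumes "has_dim X k" "has_dim Y k" "dim (X \<inter> Y) = k - 1" "1 \<le> k"
  shows "has_dim (lspan (X \<union> Y)) (Suc k)"
proof -
  have df: "fdim (lspan (X \<union> Y)) \<and> fdim (X \<inter> Y) \<and> dim (lspan (X \<union> Y)) + dim (X \<inter> Y) = k + k"
    by (rule dim_formula[OF assms(1,2)])
  note f = df[THEN conjunct1] df[THEN conjunct2, THEN conjunct2]
  then have "dim (lspan (X \<union> Y)) = Suc k" using assms(3,4) by linarith
  then show ?thesis using fdim_hd[OF f(1)] by simp
qed

lemma lemma_L:
  assumes X: "has_dim X k" and Y: "has_dim Y k" and Z: "has_dim Z k"
    and xy: "dim (X \<inter> Y) = k - 1" and zx: "dim (Z \<inter> X) = k - 1" and zy: "dim (Z \<inter> Y) = k - 1"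
  shows "X \<inter> Y \<subseteq> Z \<or> Z \<subseteq> lspan (X \<union> Y)"
proof (cases "Z \<inter> X = Z \<inter> Y")
  case True
  then have "Z \<inter> X \<subseteq> X \<inter> Y" by blast
  then have "Z \<inter> X = X \<inter> Y"
    using hd_sub[OF fdim_hd[OF int_sub(1)[OF X Y]] int_sub(3)[OF Z X]] xy zx by metis
  then show ?thesis by blast
next
  case False
  define U where "U = lspan ((Z \<inter> X) \<union> (Z \<inter> Y))"
  have UZ: "U \<subseteq> Z" unfolding U_def by (rule lspan_least[OF hd_subsp[OF Z]]) blast
  have sU: "subsp U" unfolding U_def by (rule subsp_lspan)
  have XU: "Z \<inter> X \<subseteq> U" "Z \<inter> Y \<subseteq> U" unfolding U_def using lspan_sup[of "(Z \<inter> X) \<union> (Z \<inter> Y)"] by blast+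
  have hU: "fdim U" "dim U \<le> k" using hd_sub[OF Z sU UZ] by blast+
  have "Z \<inter> X \<noteq> U"
  proof
    assume "Z \<inter> X = U"
    then have "Z \<inter> Y \<subseteq> Z \<inter> X" using XU by blast
    then have "Z \<inter> Y = Z \<inter> X"
      using hd_sub[OF fdim_hd[OF int_sub(1)[OF Z X]] int_sub(3)[OF Z Y]] zx zy by metis
    then show False using False by simp
  qed
  then have "dim (Z \<inter> X) < dim U" using sub_lt[OF hU(1) int_sub(3)[OF Z X] XU(1)] by blast
  then have "dim U = k" using hU zx by linarith
  then have "U = Z" using hd_sub[OF Z sU UZ] by blast
  moreover have "U \<subseteq> lspan (X \<union> Y)" unfolding U_def by (rule lspan_mono) blast
  ultimately show ?thesis by blast
qed



lemma gadj_iff: assumes "has_dim X k" "has_dim Y k"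
  shows "grass_adj k X Y \<longleftrightarrow> dim (X \<inter> Y) = k - 1"
  unfolding grass_adj_def using hd_dim fdim_hd[OF int_sub(1)[OF assms]] by metis

lemma star_or_top:
  assumes P: "has_dim P k" and Q: "has_dim Q k" and R: "has_dim R k" and Z: "has_dim Z k" and k: "1 \<le> k"
    and PQ: "P \<noteq> Q" "dim (P \<inter> Q) = k - 1"
    and RP: "dim (R \<inter> P) = k - 1" and RQ: "dim (R \<inter> Q) = k - 1"
    and ZP: "dim (Z \<inter> P) = k - 1" and ZQ: "dim (Z \<inter> Q) = k - 1"
    and ZR: "Z \<noteq> R" "dim (Z \<inter> R) \<noteq> k - 1"
  shows "(P \<inter> Q \<subseteq> R \<and> \<not> R \<subseteq> lspan (P \<union> Q)) \<or> (R \<subseteq> lspan (P \<union> Q) \<and> \<not> P \<inter> Q \<subseteq> R)"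
proof -
  have S: "has_dim (P \<inter> Q) (k - 1)" using fdim_hd[OF int_sub(1)[OF P Q]] PQ(2) by simp
  have T: "has_dim (lspan (P \<union> Q)) (Suc k)" by (rule sum_dim[OF P Q PQ(2) k])
  have LR: "P \<inter> Q \<subseteq> R \<or> R \<subseteq> lspan (P \<union> Q)" by (rule lemma_L[OF P Q R PQ(2) RP RQ])
  have LZ: "P \<inter> Q \<subseteq> Z \<or> Z \<subseteq> lspan (P \<union> Q)" by (rule lemma_L[OF P Q Z PQ(2) ZP ZQ])
  have "\<not> (P \<inter> Q \<subseteq> R \<and> R \<subseteq> lspan (P \<union> Q))"
  proof
    assume a: "P \<inter> Q \<subseteq> R \<and> R \<subseteq> lspan (P \<union> Q)"
    show False
    proof (cases "P \<inter> Q \<subseteq> Z")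
      case True
      then have "dim (Z \<inter> R) = k - 1" using both_contain[OF Z R ZR(1) S True _ k] a by blast
      then show False using ZR(2) by simp
    next
      case False
      then have "Z \<subseteq> lspan (P \<union> Q)" using LZ by blast
      then have "dim (Z \<inter> R) = k - 1" using both_in[OF Z R ZR(1) T] a by blast
      then show False using ZR(2) by simp
    qed
  qed
  then show ?thesis using LR by blast
qed

lemma star_member:
  assumes P: "has_dim P k" and Q: "has_dim Q k" and R: "has_dim R k" and X: "has_dim X k" and k: "1 \<le> k"
    and PQ: "dim (P \<inter> Q) = k - 1"
    and st: "P \<inter> Q \<subseteq> R" "\<not> R \<subseteq> lspan (P \<union> Q)"
    and XP: "X = P \<or> dim (X \<inter> P) = k - 1" and XQ: "X = Q \<or> dim (X \<inter> Q) = k - 1"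
    and XR: "X = R \<or> dim (X \<inter> R) = k - 1"
  shows "P \<inter> Q \<subseteq> X"
proof (cases "X = P \<or> X = Q \<or> X = R")
  case True then show ?thesis using st by blast
next
  case False
  then have d: "dim (X \<inter> P) = k - 1" "dim (X \<inter> Q) = k - 1" "dim (X \<inter> R) = k - 1" using XP XQ XR by auto
  have S: "has_dim (P \<inter> Q) (k - 1)" using fdim_hd[OF int_sub(1)[OF P Q]] PQ by simp
  have T: "has_dim (lspan (P \<union> Q)) (Suc k)" by (rule sum_dim[OF P Q PQ k])
  have L: "P \<inter> Q \<subseteq> X \<or> X \<subseteq> lspan (P \<union> Q)" by (rule lemma_L[OF P Q X PQ d(1,2)])
  show ?thesis
  proof (cases "P \<inter> Q \<subseteq> X")
    case True then show ?thesis .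
  next
    case False
    then have XT: "X \<subseteq> lspan (P \<union> Q)" using L by blast
    define RT where "RT = R \<inter> lspan (P \<union> Q)"
    have sRT: "subsp RT" unfolding RT_def by (rule subsp_Int[OF hd_subsp[OF R] subsp_lspan])
    have RTR: "RT \<subseteq> R" "RT \<noteq> R" using st(2) unfolding RT_def by blast+
    have "dim RT < k" using sub_lt[OF hd_fdim[OF R] sRT RTR] hd_dim[OF R] by simp
    moreover have fRT: "fdim RT" using hd_sub[OF R sRT RTR(1)] by (rule conjunct1)
    moreover have "P \<inter> Q \<subseteq> RT" unfolding RT_def using st(1) lspan_sup[of "P \<union> Q"] by blast
    then have "k - 1 \<le> dim RT" using hd_sub[OF fdim_hd[OF fRT] hd_subsp[OF S]] hd_dim[OF S] by metis
    ultimately have hRT: "has_dim RT (k - 1)" using fdim_hd[OF fRT] by (metis Suc_pred' k le_antisym less_Suc_eq_le less_le_trans zero_less_one)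
    have "X \<inter> R \<subseteq> RT" unfolding RT_def using XT by blast
    then have "X \<inter> R = RT" using hd_sub[OF hRT int_sub(3)[OF X R]] d(3) by blast
    then show ?thesis using \<open>P \<inter> Q \<subseteq> RT\<close> by blast
  qed
qed

lemma top_member:
  assumes P: "has_dim P k" and Q: "has_dim Q k" and R: "has_dim R k" and X: "has_dim X k" and k: "1 \<le> k"
    and PQ: "dim (P \<inter> Q) = k - 1"
    and tp: "R \<subseteq> lspan (P \<union> Q)" "\<not> P \<inter> Q \<subseteq> R"
    and XP: "X = P \<or> dim (X \<inter> P) = k - 1" and XQ: "X = Q \<or> dim (X \<inter> Q) = k - 1"
    and XR: "X = R \<or> dim (X \<inter> R) = k - 1"
  shows "X \<subseteq> lspan (P \<union> Q)"
proof (cases "X = P \<or> X = Q \<or> X = R")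
  case True then show ?thesis using tp lspan_sup[of "P \<union> Q"] by blast
next
  case False
  then have d: "dim (X \<inter> P) = k - 1" "dim (X \<inter> Q) = k - 1" "dim (X \<inter> R) = k - 1" using XP XQ XR by auto
  have T: "has_dim (lspan (P \<union> Q)) (Suc k)" by (rule sum_dim[OF P Q PQ k])
  have L: "P \<inter> Q \<subseteq> X \<or> X \<subseteq> lspan (P \<union> Q)" by (rule lemma_L[OF P Q X PQ d(1,2)])
  show ?thesis
  proof (cases "X \<subseteq> lspan (P \<union> Q)")
    case True then show ?thesis .
  next
    case False
    then have SX: "P \<inter> Q \<subseteq> X" using L by blast
    define V where "V = lspan (R \<union> (P \<inter> Q))"
    have sV: "subsp V" unfolding V_def by (rule subsp_lspan)
    have VT: "V \<subseteq> lspan (P \<union> Q)" unfolding V_def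
      by (rule lspan_least[OF subsp_lspan]) (use tp(1) lspan_sup[of "P \<union> Q"] in blast)
    have RV: "R \<subseteq> V" "R \<noteq> V" using tp(2) lspan_sup[of "R \<union> (P \<inter> Q)"] unfolding V_def by blast+
    have fV: "fdim V" "dim V \<le> Suc k" using hd_sub[OF T sV VT] by blast+
    have "k < dim V" using sub_lt[OF fV(1) hd_subsp[OF R] RV] hd_dim[OF R] by simp
    then have "dim V = Suc k" using fV by simp
    then have VT2: "V = lspan (P \<union> Q)" using hd_sub[OF T sV VT] by blast
    have XR2: "has_dim (lspan (X \<union> R)) (Suc k)" by (rule sum_dim[OF X R d(3) k])
    have "V \<subseteq> lspan (X \<union> R)" unfolding V_def by (rule lspan_mono) (use SX in blast)
    then have "lspan (P \<union> Q) \<subseteq> lspan (X \<union> R)" using VT2 by simp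
    then have "lspan (P \<union> Q) = lspan (X \<union> R)" using hd_sub[OF XR2 hd_subsp[OF T]] hd_dim[OF T] by metis
    then show ?thesis using lspan_sup[of "X \<union> R"] by blast
  qed
qed



lemma walk_of_rtrancl:
  assumes "(\<lambda>a b. adj a b \<and> b \<in> Vs)\<^sup>*\<^sup>* x y" "x \<in> Vs"
  shows "\<exists>d p. p 0 = x \<and> p d = y \<and> (\<forall>i\<le>d. p i \<in> Vs) \<and> (\<forall>i<d. adj (p i) (p (Suc i)))"
  using assms(1)
proof (induction rule: rtranclp_induct)
  case base
  show ?case using assms(2) by (intro exI[of _ 0] exI[of _ "\<lambda>_. x"]) simp
next
  case (step y z)
  then obtain d p where p: "p 0 = x" "p d = y" "\<forall>i\<le>d. p i \<in> Vs" "\<forall>i<d. adj (p i) (p (Suc i))" by blast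
  define p' where "p' = p(Suc d := z)"
  have "p' 0 = x" "p' (Suc d) = z" using p(1) by (simp_all add: p'_def)
  moreover have "\<forall>i\<le>Suc d. p' i \<in> Vs" using p(3) step(2) by (auto simp: p'_def le_Suc_eq)
  moreover have "\<forall>i<Suc d. adj (p' i) (p' (Suc i))"
  proof (intro allI impI)
    fix i assume "i < Suc d"
    then consider "i < d" | "i = d" by linarith
    then show "adj (p' i) (p' (Suc i))"
    proof cases
      case 1 then show ?thesis using p(4) by (simp add: p'_def)
    next
      case 2 then show ?thesis using p(2) step(2) by (simp add: p'_def)
    qed
  qed
  ultimately show ?case by blast
qed

definition walk :: "'v set \<Rightarrow> ('v \<Rightarrow> 'v \<Rightarrow> bool) \<Rightarrow> 'v \<Rightarrow> 'v \<Rightarrow> nat \<Rightarrow> bool" where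
  "walk Vs adj x y d \<longleftrightarrow> (\<exists>p. p 0 = x \<and> p d = y \<and> (\<forall>i\<le>d. p i \<in> Vs) \<and> (\<forall>i<d. adj (p i) (p (Suc i))))"

lemma gdist_walk: "gdist Vs adj x y = (LEAST d. walk Vs adj x y d)"
  unfolding gdist_def walk_def ..

lemma gdist_one_iff:
  assumes "x \<in> Vs" "y \<in> Vs" "x \<noteq> y"
    and w: "\<exists>d p. p 0 = x \<and> p d = y \<and> (\<forall>i\<le>d. p i \<in> Vs) \<and> (\<forall>i<d. adj (p i) (p (Suc i)))"
  shows "gdist Vs adj x y = 1 \<longleftrightarrow> adj x y"
proof
  have w': "\<exists>d. walk Vs adj x y d" using w unfolding walk_def .
  assume "gdist Vs adj x y = 1"
  then have "(LEAST d. walk Vs adj x y d) = 1" unfolding gdist_walk .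
  moreover have "walk Vs adj x y (LEAST d. walk Vs adj x y d)" by (rule LeastI_ex[OF w'])
  ultimately have "walk Vs adj x y 1" by simp
  then obtain p where "p 0 = x" "p 1 = y" "\<forall>i<1. adj (p i) (p (Suc i))" unfolding walk_def by blast
  then show "adj x y" by auto
next
  assume a: "adj x y"
  have w1: "walk Vs adj x y 1" unfolding walk_def using a assms(1,2)
    by (intro exI[of _ "\<lambda>i. if i = 0 then x else y"]) (auto simp: le_Suc_eq)
  have w0: "\<not> walk Vs adj x y 0" using assms(3) unfolding walk_def by auto
  have "\<And>d. walk Vs adj x y d \<Longrightarrow> 1 \<le> d" using w0 by (case_tac d) auto
  then have "(LEAST d. walk Vs adj x y d) = 1" using w1 by (intro Least_equality) auto
  then show "gdist Vs adj x y = 1" unfolding gdist_walk .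
qed



lemma johnson_conn:
  assumes "B \<in> johnson l m"
  shows "A \<in> johnson l m \<Longrightarrow> (\<lambda>a b. johnson_adj m a b \<and> b \<in> johnson l m)\<^sup>*\<^sup>* A B"
proof (induction "card (A - B)" arbitrary: A rule: less_induct)
  case less
  have fA: "finite A" "A \<subseteq> {..<l}" "card A = m" using less.prems unfolding johnson_def by (auto intro: finite_subset)
  have fB: "finite B" "B \<subseteq> {..<l}" "card B = m" using assms unfolding johnson_def by (auto intro: finite_subset)
  show ?case
  proof (cases "A = B")
    case True then show ?thesis by simp
  next
    case False
    have "\<not> A \<subseteq> B" using card_subset_eq[OF fB(1)] fA fB False by metis
    then obtain a where a: "a \<in> A" "a \<notin> B" by blast
    have "\<not> B \<subseteq> A" using card_subset_eq[OF fA(1)] fA fB False by metis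
    then obtain b where b: "b \<in> B" "b \<notin> A" by blast
    define A' where "A' = insert b (A - {a})"
    have m1: "m \<ge> 1" using fA(1,3) a(1) by (metis One_nat_def Suc_leI card_gt_0_iff empty_iff)
    have cA': "card A' = m" unfolding A'_def using fA a b m1 by (simp add: card_Diff_singleton)
    have J: "A' \<in> johnson l m" unfolding johnson_def A'_def using fA(2) fB(2) b(1) cA' A'_def by auto
    have "A \<inter> A' = A - {a}" unfolding A'_def using b a by auto
    then have adj: "johnson_adj m A A'" unfolding johnson_adj_def using fA a by (simp add: card_Diff_singleton)
    have "A' - B = (A - B) - {a}" unfolding A'_def using b by auto
    then have "card (A' - B) < card (A - B)" using a fA(1) by (metis Diff_iff card_Diff1_less finite_Diff)
    then have "(\<lambda>a b. johnson_adj m a b \<and> b \<in> johnson l m)\<^sup>*\<^sup>* A' B" using less.hyps J by blast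
    then show ?thesis by (rule converse_rtranclp_into_rtranclp[rotated]) (simp add: adj J)
  qed
qed

lemma subsp_coord: "subsp (coord_space n)"
  unfolding subsp_def coord_space_def by auto

lemma grass_conn:
  assumes W: "W \<in> grass n k" and k: "1 \<le> k"
  shows "U \<in> grass n k \<Longrightarrow> (\<lambda>a b. grass_adj k a b \<and> b \<in> grass n k)\<^sup>*\<^sup>* U W"
proof (induction "k - dim (U \<inter> W)" arbitrary: U rule: less_induct)
  case less
  have hU: "has_dim U k" "U \<subseteq> coord_space n" using less.prems unfolding grass_def by auto
  have hW: "has_dim W k" "W \<subseteq> coord_space n" using W unfolding grass_def by auto
  show ?case
  proof (cases "U = W")
    case True then show ?thesis by simp
  next
    case False
    obtain C A B where T: "finite C" "finite A" "finite B" "C \<inter> A = {}" "C \<inter> B = {}" "A \<inter> B = {}"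
      "lindep_free (C \<union> A \<union> B)" "lspan C = U \<inter> W" "lspan (C \<union> A) = U" "lspan (C \<union> B) = W"
      "card C + card A = k" "card C + card B = k"
      using triple_basis[OF hU(1) hW(1)] by blast
    have dC: "dim (U \<inter> W) = card C" using hd_dim[OF hd_basis[OF T(1) lindep_free_subset[OF T(7)]]] T(8) by auto
    have lt: "card C < k" using int_lt[OF hU(1) hW(1) False] dC by simp
    then obtain a where a: "a \<in> A" using T(11) by (metis add.right_neutral card.empty ex_in_conv less_not_refl)
    obtain b where b: "b \<in> B" using T(12) lt by (metis add.right_neutral card.empty ex_in_conv less_not_refl)
    define D where "D = C \<union> (A - {a}) \<union> {b}"
    have DS: "D \<subseteq> C \<union> A \<union> B" unfolding D_def using b by blast
    have fD: "finite D" unfolding D_def using T(1,2) by simp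
    have iD: "lindep_free D" by (rule lindep_free_subset[OF T(7) DS])
    have bn: "b \<notin> C" "b \<notin> A" using b T(5,6) by blast+
    have c1: "card (C \<union> (A - {a})) = card C + (card A - 1)"
      using T(1,2,4) a by (subst card_Un_disjoint) (auto simp: card_Diff_singleton)
    have cA1: "card A \<ge> 1" using T(2) a by (metis One_nat_def Suc_leI card_gt_0_iff empty_iff)
    have "card D = Suc (card (C \<union> (A - {a})))" unfolding D_def using bn T(1,2) by simp
    then have cD: "card D = k" using c1 cA1 T(11) by simp
    define U' where "U' = lspan D"
    have hU': "has_dim U' k" unfolding U'_def using hd_basis[OF fD iD] cD by simp
    have UW: "U \<union> W \<subseteq> coord_space n" using hU hW by blast
    have CAU: "C \<union> A \<subseteq> U" using lspan_sup[of "C \<union> A"] unfolding T(9) .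
    have CBW: "C \<union> B \<subseteq> W" using lspan_sup[of "C \<union> B"] unfolding T(10) .
    have "D \<subseteq> U \<union> W" using DS CAU CBW by blast
    then have "U' \<subseteq> coord_space n" unfolding U'_def using lspan_least[OF subsp_coord] UW by blast
    then have gU': "U' \<in> grass n k" unfolding grass_def using hU' by blast
    have aU: "a \<in> U" by (rule subsetD[OF CAU]) (simp add: a)
    have aU': "a \<notin> U'"
    proof
      assume "a \<in> U'"
      moreover have Dsub: "D \<subseteq> (C \<union> A \<union> B) - {a}" unfolding D_def using a bn T(4) b by blast
      ultimately have "a \<in> lspan ((C \<union> A \<union> B) - {a})" unfolding U'_def using lspan_mono[OF Dsub] by blast
      then show False using indep_not_in_span[OF T(7)] a by blast
    qed
    have "U \<noteq> U'" using aU aU' by blast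
    then have lt1: "dim (U \<inter> U') < k" by (rule int_lt[OF hU(1) hU'])
    define E where "E = C \<union> (A - {a})"
    have dE: "C \<inter> (A - {a}) = {}" using T(4) by blast
    have cE0: "card E = card C + card (A - {a})" unfolding E_def using T(1,2) dE by (simp add: card_Un_disjoint)
    have cE: "card E = k - 1" using cE0 card_Diff_singleton[OF a] T(11) cA1 by simp
    have ES: "E \<subseteq> C \<union> A \<union> B" unfolding E_def by blast
    have iE: "lindep_free E" by (rule lindep_free_subset[OF T(7) ES])
    have fE: "finite E" unfolding E_def using T(1,2) by simp
    have hE: "has_dim (lspan E) (k - 1)" using hd_basis[OF fE iE] cE by simp
    have E1: "E \<subseteq> C \<union> A" unfolding E_def by blast
    have E2: "E \<subseteq> D" unfolding E_def D_def by blast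
    have "lspan E \<subseteq> U" using lspan_mono[OF E1] unfolding T(9) .
    moreover have "lspan E \<subseteq> U'" unfolding U'_def by (rule lspan_mono[OF E2])
    ultimately have "lspan E \<subseteq> U \<inter> U'" by blast
    then have "k - 1 \<le> dim (U \<inter> U')"
      using hd_sub[OF fdim_hd[OF int_sub(1)[OF hU(1) hU']] subsp_lspan] hd_dim[OF hE] by metis
    then have "dim (U \<inter> U') = k - 1" using lt1 by linarith
    then have adj: "grass_adj k U U'" using gadj_iff[OF hU(1) hU'] by simp
    define G where "G = C \<union> {b}"
    have cG: "card G = Suc (card C)" unfolding G_def using T(1) bn by simp
    have GS: "G \<subseteq> C \<union> A \<union> B" unfolding G_def using b by blast
    have iG: "lindep_free G" by (rule lindep_free_subset[OF T(7) GS])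
    have fG: "finite G" unfolding G_def using T(1) by simp
    have hG: "has_dim (lspan G) (Suc (card C))" using hd_basis[OF fG iG] cG by simp
    have G1: "G \<subseteq> C \<union> B" unfolding G_def using b by blast
    have G2: "G \<subseteq> D" unfolding G_def D_def by blast
    have "lspan G \<subseteq> W" using lspan_mono[OF G1] unfolding T(10) .
    moreover have "lspan G \<subseteq> U'" unfolding U'_def by (rule lspan_mono[OF G2])
    ultimately have "lspan G \<subseteq> U' \<inter> W" by blast
    then have "Suc (card C) \<le> dim (U' \<inter> W)"
      using hd_sub[OF fdim_hd[OF int_sub(1)[OF hU' hW(1)]] subsp_lspan] hd_dim[OF hG] by metis
    then have "k - dim (U' \<inter> W) < k - dim (U \<inter> W)" using dC lt by linarith
    then have "(\<lambda>a b. grass_adj k a b \<and> b \<in> grass n k)\<^sup>*\<^sup>* U' W" using less.hyps gU' by blast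
    then show ?thesis by (rule converse_rtranclp_into_rtranclp[rotated]) (simp add: adj gU')
  qed
qed



lemma johnson_fin: "X \<in> johnson l m \<Longrightarrow> finite X \<and> X \<subseteq> {..<l} \<and> card X = m"
  unfolding johnson_def by (auto intro: finite_subset)

lemma johnson_split:
  assumes "X1 \<in> johnson l m" "X2 \<in> johnson l m" "johnson_adj m X1 X2" "1 \<le> m"
  obtains A x1 x2 where "X1 = insert x1 A" "X2 = insert x2 A" "x1 \<notin> A" "x2 \<notin> A" "x1 \<noteq> x2"
    "card A = m - 1" "finite A"
proof -
  define A where "A = X1 \<inter> X2"
  have f1: "finite X1" "card X1 = m" and f2: "finite X2" "card X2 = m" using assms johnson_fin by blast+
  have cA: "card A = m - 1" using assms(3) unfolding johnson_adj_def A_def .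
  have fA: "finite A" unfolding A_def using f1 by simp
  have "card (X1 - A) = 1" using card_Diff_subset_Int[of X1 X2] fA f1 cA assms(4) unfolding A_def
    by (simp add: Diff_Int)
  then obtain x1 where x1: "X1 - A = {x1}" by (rule card_1_singletonE)
  have "card (X2 - A) = 1" using card_Diff_subset_Int[of X2 X1] fA f2 cA assms(4) unfolding A_def
    by (simp add: Diff_Int Int_commute)
  then obtain x2 where x2: "X2 - A = {x2}" by (rule card_1_singletonE)
  have "X1 = insert x1 A" using x1 unfolding A_def by blast
  moreover have "X2 = insert x2 A" using x2 unfolding A_def by blast
  moreover have "x1 \<notin> A" "x2 \<notin> A" using x1 x2 by blast+
  moreover have "x1 \<noteq> x2" using x1 x2 unfolding A_def by blast
  ultimately show ?thesis using that cA fA by blast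
qed

lemma johnson_witness:
  assumes J1: "X1 \<in> johnson l m" and J2: "X2 \<in> johnson l m" and J3: "X3 \<in> johnson l m"
    and m: "1 < m" "m < l - 1"
    and a12: "johnson_adj m X1 X2" and a31: "johnson_adj m X3 X1" and a32: "johnson_adj m X3 X2"
    and n31: "X3 \<noteq> X1" and n32: "X3 \<noteq> X2"
  shows "\<exists>Y\<in>johnson l m. johnson_adj m Y X1 \<and> johnson_adj m Y X2 \<and> Y \<noteq> X3 \<and> \<not> johnson_adj m Y X3"
proof -
  obtain A x1 x2 where S: "X1 = insert x1 A" "X2 = insert x2 A" "x1 \<notin> A" "x2 \<notin> A" "x1 \<noteq> x2"
    "card A = m - 1" "finite A"
    using johnson_split[OF J1 J2 a12] m by (metis less_imp_le)
  have f3: "finite X3" "X3 \<subseteq> {..<l}" "card X3 = m" using J3 johnson_fin by blast+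
  have L1: "X1 \<subseteq> {..<l}" "X2 \<subseteq> {..<l}" using J1 J2 johnson_fin by blast+
  have c31: "card (X3 \<inter> X1) = m - 1" and c32: "card (X3 \<inter> X2) = m - 1"
    using a31 a32 unfolding johnson_adj_def by auto
  show ?thesis
  proof (cases "A \<subseteq> X3")
    case True
    have x1n: "x1 \<notin> X3"
    proof
      assume "x1 \<in> X3"
      then have "X1 \<subseteq> X3" using True S(1) by blast
      then have "X1 = X3" using card_subset_eq[OF f3(1)] f3(3) J1 johnson_fin by metis
      then show False using n31 by simp
    qed
    have x2n: "x2 \<notin> X3"
    proof
      assume "x2 \<in> X3"
      then have "X2 \<subseteq> X3" using True S(2) by blast
      then have "X2 = X3" using card_subset_eq[OF f3(1)] f3(3) J2 johnson_fin by metis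
      then show False using n32 by simp
    qed
    obtain a where a: "a \<in> A" using S(6,7) m(1) by (metis card.empty ex_in_conv less_numeral_extra(3) zero_less_diff)
    define Y where "Y = insert x1 (insert x2 (A - {a}))"
    have cAa: "card (A - {a}) = m - 2" using card_Diff_singleton[OF a] S(6) by simp
    have cY: "card Y = m" unfolding Y_def using S(3,4,5,7) cAa m(1) by simp
    have YL: "Y \<subseteq> {..<l}" unfolding Y_def using L1 S(1,2) by blast
    have JY: "Y \<in> johnson l m" unfolding johnson_def using cY YL by blast
    have "Y \<inter> X1 = insert x1 (A - {a})" unfolding Y_def S(1) using S(3,4,5) by blast
    then have y1: "johnson_adj m Y X1" unfolding johnson_adj_def using S(3,7) cAa m(1) by simp
    have "Y \<inter> X2 = insert x2 (A - {a})" unfolding Y_def S(2) using S(3,4,5) by blast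
    then have y2: "johnson_adj m Y X2" unfolding johnson_adj_def using S(4,7) cAa m(1) by simp
    have "Y \<inter> X3 = A - {a}" unfolding Y_def using x1n x2n True by blast
    then have "card (Y \<inter> X3) = m - 2" using cAa by simp
    moreover have "m - 2 \<noteq> m - 1" using m(1) by simp
    ultimately have y3: "\<not> johnson_adj m Y X3" unfolding johnson_adj_def by simp
    have "a \<notin> Y" unfolding Y_def using S(3,4) a by blast
    then have "Y \<noteq> X3" using a True by blast
    then show ?thesis using JY y1 y2 y3 by blast
  next
    case False
    then obtain y where y: "y \<in> A" "y \<notin> X3" by blast
    have "X3 \<inter> X1 \<subseteq> X1 - {y}" using y by blast
    moreover have "card (X1 - {y}) = m - 1" using card_Diff_singleton[of y X1] S(1) y(1) J1 johnson_fin by auto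
    ultimately have e1: "X3 \<inter> X1 = X1 - {y}" using card_subset_eq[of "X1 - {y}" "X3 \<inter> X1"] c31 S(1,7) by auto
    have "X3 \<inter> X2 \<subseteq> X2 - {y}" using y by blast
    moreover have "card (X2 - {y}) = m - 1" using card_Diff_singleton[of y X2] S(2) y(1) J2 johnson_fin by auto
    ultimately have e2: "X3 \<inter> X2 = X2 - {y}" using card_subset_eq[of "X2 - {y}" "X3 \<inter> X2"] c32 S(2,7) by auto
    define K where "K = insert x1 (insert x2 (A - {y}))"
    have cAy: "card (A - {y}) = m - 2" using card_Diff_singleton[OF y(1)] S(6) by simp
    have cK: "card K = m" unfolding K_def using S(3,4,5,7) cAy m(1) by simp
    have yx: "y \<noteq> x1" "y \<noteq> x2" using y(1) S(3,4) by blast+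
    have "x1 \<in> X1 - {y}" using yx S(1) by simp
    then have k1: "x1 \<in> X3" using e1 by (metis IntD1)
    have "x2 \<in> X2 - {y}" using yx S(2) by simp
    then have k2: "x2 \<in> X3" using e2 by (metis IntD1)
    have "A - {y} \<subseteq> X1 - {y}" using S(1) by blast
    then have k3: "A - {y} \<subseteq> X3" using e1 by (metis Int_lower1 order_trans)
    have "K \<subseteq> X3" unfolding K_def using k1 k2 k3 by simp
    then have X3K: "X3 = K" using card_subset_eq[OF f3(1)] f3(3) cK by metis
    have cU: "card (insert x1 (insert x2 A)) = Suc m" using S(3,4,5,6,7) m(1) by simp
    have nsub: "\<not> {..<l} \<subseteq> insert x1 (insert x2 A)"
    proof
      assume "{..<l} \<subseteq> insert x1 (insert x2 A)"
      then have "card {..<l} \<le> card (insert x1 (insert x2 A))" using S(7) by (intro card_mono) simp_all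
      then show False using cU m(2) by simp
    qed
    then obtain z where z: "z < l" "z \<notin> insert x1 (insert x2 A)" by blast
    define Y where "Y = insert z A"
    have cY: "card Y = m" unfolding Y_def using z S(6,7) m(1) by simp
    have YL: "Y \<subseteq> {..<l}" unfolding Y_def using L1 S(1) z(1) by blast
    have JY: "Y \<in> johnson l m" unfolding johnson_def using cY YL by blast
    have "Y \<inter> X1 = A" unfolding Y_def S(1) using z by blast
    then have y1: "johnson_adj m Y X1" unfolding johnson_adj_def using S(6) by simp
    have "Y \<inter> X2 = A" unfolding Y_def S(2) using z by blast
    then have y2: "johnson_adj m Y X2" unfolding johnson_adj_def using S(6) by simp
    have "Y \<inter> X3 = A - {y}" unfolding Y_def X3K K_def using z S(3,4) by blast
    then have "card (Y \<inter> X3) = m - 2" using cAy by simp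
    moreover have "m - 2 \<noteq> m - 1" using m(1) by simp
    ultimately have y3: "\<not> johnson_adj m Y X3" unfolding johnson_adj_def by simp
    have "Y \<noteq> X3" using y unfolding Y_def by blast
    then show ?thesis using JY y1 y2 y3 by blast
  qed
qed



lemma johnson_nbr:
  assumes "X \<in> johnson l m" "1 \<le> m" "m < l"
  shows "\<exists>Y\<in>johnson l m. johnson_adj m X Y"
proof -
  have f: "finite X" "X \<subseteq> {..<l}" "card X = m" using assms(1) johnson_fin by blast+
  obtain a where a: "a \<in> X" using f assms(2) by (metis card.empty ex_in_conv not_one_le_zero)
  have "\<not> {..<l} \<subseteq> X"
  proof
    assume "{..<l} \<subseteq> X"
    then have "card {..<l} \<le> card X" using f(1) by (rule card_mono[rotated])
    then show False using f(3) assms(3) by simp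
  qed
  then obtain b where b: "b < l" "b \<notin> X" by blast
  define Y where "Y = insert b (X - {a})"
  have cY: "card Y = m" unfolding Y_def using f a b assms(2) by (simp add: card_Diff_singleton)
  have JY: "Y \<in> johnson l m" unfolding johnson_def Y_def using f(2) b cY Y_def by auto
  have "X \<inter> Y = X - {a}" unfolding Y_def using b by auto
  then have "johnson_adj m X Y" unfolding johnson_adj_def using f a by (simp add: card_Diff_singleton)
  then show ?thesis using JY by blast
qed

lemma johnson_common:
  assumes J1: "X1 \<in> johnson l m" and J2: "X2 \<in> johnson l m" and a12: "johnson_adj m X1 X2"
    and m: "1 < m" "m < l - 1"
  shows "\<exists>W\<in>johnson l m. johnson_adj m W X1 \<and> johnson_adj m W X2"
proof -
  obtain A x1 x2 where S: "X1 = insert x1 A" "X2 = insert x2 A" "x1 \<notin> A" "x2 \<notin> A" "x1 \<noteq> x2"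
    "card A = m - 1" "finite A"
    using johnson_split[OF J1 J2 a12] m by (metis less_imp_le)
  have L1: "X1 \<subseteq> {..<l}" "X2 \<subseteq> {..<l}" using J1 J2 johnson_fin by blast+
  have cU: "card (insert x1 (insert x2 A)) = Suc m" using S(3,4,5,6,7) m(1) by simp
  have nsub: "\<not> {..<l} \<subseteq> insert x1 (insert x2 A)"
  proof
    assume "{..<l} \<subseteq> insert x1 (insert x2 A)"
    then have "card {..<l} \<le> card (insert x1 (insert x2 A))" using S(7) by (intro card_mono) simp_all
    then show False using cU m(2) by simp
  qed
  then obtain z where z: "z < l" "z \<notin> insert x1 (insert x2 A)" by blast
  define W where "W = insert z A"
  have cW: "card W = m" unfolding W_def using z S(6,7) m(1) by simp
  have WL: "W \<subseteq> {..<l}" unfolding W_def using L1 S(1) z(1) by blast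
  have JW: "W \<in> johnson l m" unfolding johnson_def using cW WL by blast
  have "W \<inter> X1 = A" unfolding W_def S(1) using z by blast
  then have y1: "johnson_adj m W X1" unfolding johnson_adj_def using S(6) by simp
  have "W \<inter> X2 = A" unfolding W_def S(2) using z by blast
  then have y2: "johnson_adj m W X2" unfolding johnson_adj_def using S(6) by simp
  show ?thesis using JW y1 y2 by blast
qed

lemma max_clique_ins:
  assumes "maximal_clique Vs adj C" "w \<in> Vs" "\<And>x. x \<in> C \<Longrightarrow> x \<noteq> w \<Longrightarrow> adj x w \<and> adj w x"
  shows "w \<in> C"
proof -
  have "clique Vs adj (insert w C)" using assms unfolding maximal_clique_def clique_def by blast
  then have "insert w C = C" using assms(1) unfolding maximal_clique_def by blast
  then show ?thesis by blast
qed

lemma gadj_sym: "grass_adj k X Y \<longleftrightarrow> grass_adj k Y X"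
  unfolding grass_adj_def by (simp add: Int_commute)

lemma jadj_sym: "johnson_adj m X Y \<longleftrightarrow> johnson_adj m Y X"
  unfolding johnson_adj_def by (simp add: Int_commute)

lemma clique_mem: "clique Vs adj M \<Longrightarrow> P \<in> M \<Longrightarrow> X \<in> M \<Longrightarrow> X = P \<or> adj X P"
  unfolding clique_def by blast



theorem lemma1:
  fixes n k l m :: nat and f :: "nat set \<Rightarrow> (nat \<Rightarrow> 'a::division_ring) set"
    and C :: "(nat \<Rightarrow> 'a) set set"
  assumes "4 \<le> n" and "4 \<le> l"
    and "1 < k" and "k < n - 1" and "1 < m" and "m < l - 1"
    and "min m (l - m) \<le> min k (n - k)"
    and "isometric_embedding (johnson l m) (johnson_adj m) (grass n k) (grass_adj k) f"
    and "maximal_clique (f ` johnson l m) (grass_adj k) C"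
  shows "\<exists>!M. maximal_clique (grass n k) (grass_adj k) M \<and> C \<subseteq> M"
proof -
  define J where "J = johnson l m"
  define G :: "(nat \<Rightarrow> 'a) set set" where "G = grass n k"
  have k1: "1 \<le> k" using assms(3) by simp
  have m1: "1 \<le> m" "1 < m" "m < l" "m < l - 1" using assms(5,6) by auto
  have inj: "inj_on f J" and fJ: "f ` J \<subseteq> G"
    and iso: "\<And>x y. x \<in> J \<Longrightarrow> y \<in> J \<Longrightarrow> gdist G (grass_adj k) (f x) (f y) = gdist J (johnson_adj m) x y"
    using assms(8) unfolding isometric_embedding_def J_def G_def by auto
  have mc: "maximal_clique (f ` J) (grass_adj k) C" using assms(9) unfolding J_def .
  have hdG: "\<And>X. X \<in> G \<Longrightarrow> has_dim X k" unfolding G_def grass_def by blast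
  have jne: "\<And>X Y. X \<in> J \<Longrightarrow> johnson_adj m X Y \<Longrightarrow> X \<noteq> Y"
    using m1(1) unfolding J_def johnson_def johnson_adj_def by auto
  have gne: "\<And>X Y. X \<in> G \<Longrightarrow> grass_adj k X Y \<Longrightarrow> X \<noteq> Y"
  proof -
    fix X Y assume a: "X \<in> G" "grass_adj k X Y"
    show "X \<noteq> Y"
    proof
      assume "X = Y"
      then have "has_dim X (k - 1)" using a(2) unfolding grass_adj_def by simp
      moreover have "has_dim X k" using hdG a(1) by blast
      ultimately have "k - 1 = k" by (rule hd_unique)
      then show False using k1 by simp
    qed
  qed
  have wJ: "\<And>X Y. X \<in> J \<Longrightarrow> Y \<in> J \<Longrightarrow>
      \<exists>d p. p 0 = X \<and> p d = Y \<and> (\<forall>i\<le>d. p i \<in> J) \<and> (\<forall>i<d. johnson_adj m (p i) (p (Suc i)))"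
  proof -
    fix X Y assume a: "X \<in> J" "Y \<in> J"
    then have "(\<lambda>a b. johnson_adj m a b \<and> b \<in> johnson l m)\<^sup>*\<^sup>* X Y" using johnson_conn unfolding J_def by blast
    then show "\<exists>d p. p 0 = X \<and> p d = Y \<and> (\<forall>i\<le>d. p i \<in> J) \<and> (\<forall>i<d. johnson_adj m (p i) (p (Suc i)))"
      using walk_of_rtrancl[of "johnson_adj m" J X Y] a(1) unfolding J_def by blast
  qed
  have wG: "\<And>X Y. X \<in> G \<Longrightarrow> Y \<in> G \<Longrightarrow>
      \<exists>d p. p 0 = X \<and> p d = Y \<and> (\<forall>i\<le>d. p i \<in> G) \<and> (\<forall>i<d. grass_adj k (p i) (p (Suc i)))"
  proof -
    fix X Y :: "(nat \<Rightarrow> 'a) set" assume "X \<in> G" "Y \<in> G"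
    then have "(\<lambda>a b. grass_adj k a b \<and> b \<in> grass n k)\<^sup>*\<^sup>* X Y" using grass_conn k1 unfolding G_def by blast
    then show "\<exists>d p. p 0 = X \<and> p d = Y \<and> (\<forall>i\<le>d. p i \<in> G) \<and> (\<forall>i<d. grass_adj k (p i) (p (Suc i)))"
      using walk_of_rtrancl[of "grass_adj k" G X Y] \<open>X \<in> G\<close> unfolding G_def by blast
  qed
  have JG: "\<And>X Y. X \<in> J \<Longrightarrow> Y \<in> J \<Longrightarrow> johnson_adj m X Y \<Longrightarrow> grass_adj k (f X) (f Y)"
  proof -
    fix X Y assume a: "X \<in> J" "Y \<in> J" "johnson_adj m X Y"
    have ne: "X \<noteq> Y" using jne a by blast
    have "gdist J (johnson_adj m) X Y = 1" using gdist_one_iff[OF a(1,2) ne wJ[OF a(1,2)]] a(3) by blast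
    then have "gdist G (grass_adj k) (f X) (f Y) = 1" using iso a by simp
    moreover have "f X \<noteq> f Y" using inj a ne by (meson inj_on_def)
    moreover have G2: "f X \<in> G" "f Y \<in> G" using fJ a by blast+
    ultimately show "grass_adj k (f X) (f Y)" using gdist_one_iff[OF G2 _ wG[OF G2]] by blast
  qed
  have GJ: "\<And>X Y. X \<in> J \<Longrightarrow> Y \<in> J \<Longrightarrow> grass_adj k (f X) (f Y) \<Longrightarrow> johnson_adj m X Y"
  proof -
    fix X Y assume a: "X \<in> J" "Y \<in> J" "grass_adj k (f X) (f Y)"
    have G2: "f X \<in> G" "f Y \<in> G" using fJ a by blast+
    have ne: "f X \<noteq> f Y" using gne G2 a by blast
    then have ne': "X \<noteq> Y" by blast
    have "gdist G (grass_adj k) (f X) (f Y) = 1" using gdist_one_iff[OF G2 ne wG[OF G2]] a(3) by blast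
    then have "gdist J (johnson_adj m) X Y = 1" using iso a by simp
    then show "johnson_adj m X Y" using gdist_one_iff[OF a(1,2) ne' wJ[OF a(1,2)]] by blast
  qed
  have Csub: "C \<subseteq> f ` J" and Ccl: "\<And>x y. x \<in> C \<Longrightarrow> y \<in> C \<Longrightarrow> x \<noteq> y \<Longrightarrow> grass_adj k x y"
    using mc unfolding maximal_clique_def clique_def by blast+
  have ins: "\<And>w. w \<in> f ` J \<Longrightarrow> (\<And>x. x \<in> C \<Longrightarrow> x \<noteq> w \<Longrightarrow> grass_adj k x w) \<Longrightarrow> w \<in> C"
    using max_clique_ins[OF mc] gadj_sym by metis
  have J0: "{..<m} \<in> J" unfolding J_def johnson_def using m1 by auto
  have "C \<noteq> {}" using ins[of "f {..<m}"] J0 by blast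
  then obtain P where P: "P \<in> C" by blast
  then obtain X1 where X1: "X1 \<in> J" "P = f X1" using Csub by blast
  obtain X1' where X1': "X1' \<in> J" "johnson_adj m X1 X1'" using johnson_nbr[OF X1(1)[unfolded J_def] m1(1,3)] unfolding J_def by blast
  have "\<exists>Q\<in>C. Q \<noteq> P"
  proof (rule ccontr)
    assume "\<not> (\<exists>Q\<in>C. Q \<noteq> P)"
    then have allP: "\<And>x. x \<in> C \<Longrightarrow> x = P" by blast
    have "grass_adj k P (f X1')" using JG[OF X1(1) X1'(1,2)] X1(2) by simp
    then have "f X1' \<in> C" using ins[of "f X1'"] X1'(1) allP by blast
    then have "f X1' = f X1" using allP X1(2) by simp
    then have "X1' = X1" using inj X1(1) X1'(1) by (meson inj_on_def)
    then show False using jne[OF X1(1) X1'(2)] by simp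
  qed
  then obtain Q where Q: "Q \<in> C" "Q \<noteq> P" by blast
  then obtain X2 where X2: "X2 \<in> J" "Q = f X2" using Csub by blast
  have aPQ: "grass_adj k P Q" using Ccl P Q by metis
  have a12: "johnson_adj m X1 X2" using GJ[OF X1(1) X2(1)] aPQ X1(2) X2(2) by simp
  obtain W where W: "W \<in> J" "johnson_adj m W X1" "johnson_adj m W X2"
    using johnson_common[OF X1(1)[unfolded J_def] X2(1)[unfolded J_def] a12 m1(2,4)] unfolding J_def by blast
  have "\<exists>R\<in>C. R \<noteq> P \<and> R \<noteq> Q"
  proof (rule ccontr)
    assume "\<not> (\<exists>R\<in>C. R \<noteq> P \<and> R \<noteq> Q)"
    then have allPQ: "\<And>x. x \<in> C \<Longrightarrow> x = P \<or> x = Q" by blast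
    have "grass_adj k P (f W)" "grass_adj k Q (f W)"
      using JG[OF X1(1) W(1)] JG[OF X2(1) W(1)] W(2,3) X1(2) X2(2) jadj_sym by metis+
    then have "f W \<in> C" using ins[of "f W"] W(1) allPQ by blast
    then have "f W = f X1 \<or> f W = f X2" using allPQ X1(2) X2(2) by simp
    then have "W = X1 \<or> W = X2" using inj X1(1) X2(1) W(1) by (meson inj_on_def)
    then show False using jne[OF W(1) W(2)] jne[OF W(1) W(3)] by blast
  qed
  then obtain R where R: "R \<in> C" "R \<noteq> P" "R \<noteq> Q" by blast
  then obtain X3 where X3: "X3 \<in> J" "R = f X3" using Csub by blast
  have aRP: "grass_adj k R P" and aRQ: "grass_adj k R Q" using Ccl P Q R by metis+
  have a31: "johnson_adj m X3 X1" using GJ[OF X3(1) X1(1)] aRP X1(2) X3(2) by simp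
  have a32: "johnson_adj m X3 X2" using GJ[OF X3(1) X2(1)] aRQ X2(2) X3(2) by simp
  have n31: "X3 \<noteq> X1" "X3 \<noteq> X2" using R X1 X2 X3 by blast+
  obtain Y where Y: "Y \<in> J" "johnson_adj m Y X1" "johnson_adj m Y X2" "Y \<noteq> X3" "\<not> johnson_adj m Y X3"
    using johnson_witness[OF X1(1)[unfolded J_def] X2(1)[unfolded J_def] X3(1)[unfolded J_def] m1(2,4) a12 a31 a32 n31]
    unfolding J_def by blast
  define Z where "Z = f Y"
  have aZP: "grass_adj k Z P" using JG[OF Y(1) X1(1) Y(2)] X1(2) Z_def by simp
  have aZQ: "grass_adj k Z Q" using JG[OF Y(1) X2(1) Y(3)] X2(2) Z_def by simp
  have nZR: "Z \<noteq> R" using inj Y(1,4) X3 Z_def by (meson inj_on_def)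
  have naZR: "\<not> grass_adj k Z R" using GJ[OF Y(1) X3(1)] Y(5) X3(2) Z_def by blast
  have inG: "P \<in> G" "Q \<in> G" "R \<in> G" "Z \<in> G" using fJ X1 X2 X3 Y(1) Z_def by blast+
  have hP: "has_dim P k" and hQ: "has_dim Q k" and hR: "has_dim R k" and hZ: "has_dim Z k"
    using hdG inG by blast+
  have dPQ: "dim (P \<inter> Q) = k - 1" using gadj_iff[OF hP hQ] aPQ by blast
  have dRP: "dim (R \<inter> P) = k - 1" using gadj_iff[OF hR hP] aRP by blast
  have dRQ: "dim (R \<inter> Q) = k - 1" using gadj_iff[OF hR hQ] aRQ by blast
  have dZP: "dim (Z \<inter> P) = k - 1" using gadj_iff[OF hZ hP] aZP by blast
  have dZQ: "dim (Z \<inter> Q) = k - 1" using gadj_iff[OF hZ hQ] aZQ by blast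
  have dZR: "dim (Z \<inter> R) \<noteq> k - 1" using gadj_iff[OF hZ hR] naZR by blast
  have ST: "(P \<inter> Q \<subseteq> R \<and> \<not> R \<subseteq> lspan (P \<union> Q)) \<or> (R \<subseteq> lspan (P \<union> Q) \<and> \<not> P \<inter> Q \<subseteq> R)"
    using star_or_top[OF hP hQ hR hZ k1 Q(2)[symmetric] dPQ dRP dRQ dZP dZQ nZR dZR] .
  have hS: "has_dim (P \<inter> Q) (k - 1)" using fdim_hd[OF int_sub(1)[OF hP hQ]] dPQ by simp
  have hT: "has_dim (lspan (P \<union> Q)) (Suc k)" by (rule sum_dim[OF hP hQ dPQ k1])
  have memb: "\<And>M X. clique G (grass_adj k) M \<Longrightarrow> C \<subseteq> M \<Longrightarrow> X \<in> M \<Longrightarrow>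
     has_dim X k \<and> (X = P \<or> dim (X \<inter> P) = k - 1) \<and> (X = Q \<or> dim (X \<inter> Q) = k - 1) \<and> (X = R \<or> dim (X \<inter> R) = k - 1)"
  proof -
    fix M X assume a: "clique G (grass_adj k) M" "C \<subseteq> M" "X \<in> M"
    have XG: "X \<in> G" using a unfolding clique_def by blast
    then have hX: "has_dim X k" using hdG by blast
    have "X = P \<or> grass_adj k X P" using clique_mem[OF a(1) _ a(3)] a(2) P by blast
    moreover have "X = Q \<or> grass_adj k X Q" using clique_mem[OF a(1) _ a(3)] a(2) Q by blast
    moreover have "X = R \<or> grass_adj k X R" using clique_mem[OF a(1) _ a(3)] a(2) R by blast
    ultimately show "has_dim X k \<and> (X = P \<or> dim (X \<inter> P) = k - 1) \<and> (X = Q \<or> dim (X \<inter> Q) = k - 1) \<and> (X = R \<or> dim (X \<inter> R) = k - 1)"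
      using gadj_iff[OF hX hP] gadj_iff[OF hX hQ] gadj_iff[OF hX hR] hX by blast
  qed
  have union_clique: "\<And>M1 M2. clique G (grass_adj k) M1 \<Longrightarrow> C \<subseteq> M1 \<Longrightarrow> clique G (grass_adj k) M2 \<Longrightarrow> C \<subseteq> M2
      \<Longrightarrow> clique G (grass_adj k) (M1 \<union> M2)"
  proof -
    fix M1 M2 assume a: "clique G (grass_adj k) M1" "C \<subseteq> M1" "clique G (grass_adj k) M2" "C \<subseteq> M2"
    have mem: "\<And>X. X \<in> M1 \<union> M2 \<Longrightarrow> has_dim X k \<and> (X = P \<or> dim (X \<inter> P) = k - 1) \<and> (X = Q \<or> dim (X \<inter> Q) = k - 1) \<and> (X = R \<or> dim (X \<inter> R) = k - 1)"
      using memb a by blast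
    have sub: "M1 \<union> M2 \<subseteq> G" using a unfolding clique_def by blast
    have "\<forall>X\<in>M1 \<union> M2. \<forall>Y\<in>M1 \<union> M2. X \<noteq> Y \<longrightarrow> grass_adj k X Y"
    proof (intro ballI impI)
      fix X Y assume XY: "X \<in> M1 \<union> M2" "Y \<in> M1 \<union> M2" "X \<noteq> Y"
      have mX: "has_dim X k" "X = P \<or> dim (X \<inter> P) = k - 1" "X = Q \<or> dim (X \<inter> Q) = k - 1" "X = R \<or> dim (X \<inter> R) = k - 1"
        using mem[OF XY(1)] by blast+
      have mY: "has_dim Y k" "Y = P \<or> dim (Y \<inter> P) = k - 1" "Y = Q \<or> dim (Y \<inter> Q) = k - 1" "Y = R \<or> dim (Y \<inter> R) = k - 1"
        using mem[OF XY(2)] by blast+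
      from ST have "dim (X \<inter> Y) = k - 1"
      proof
        assume st: "P \<inter> Q \<subseteq> R \<and> \<not> R \<subseteq> lspan (P \<union> Q)"
        have "P \<inter> Q \<subseteq> X" using star_member[OF hP hQ hR mX(1) k1 dPQ _ _ mX(2-4)] st by blast
        moreover have "P \<inter> Q \<subseteq> Y" using star_member[OF hP hQ hR mY(1) k1 dPQ _ _ mY(2-4)] st by blast
        ultimately show ?thesis using both_contain[OF mX(1) mY(1) XY(3) hS _ _ k1] by blast
      next
        assume tp: "R \<subseteq> lspan (P \<union> Q) \<and> \<not> P \<inter> Q \<subseteq> R"
        have "X \<subseteq> lspan (P \<union> Q)" using top_member[OF hP hQ hR mX(1) k1 dPQ _ _ mX(2-4)] tp by blast
        moreover have "Y \<subseteq> lspan (P \<union> Q)" using top_member[OF hP hQ hR mY(1) k1 dPQ _ _ mY(2-4)] tp by blast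
        ultimately show ?thesis using both_in[OF mX(1) mY(1) XY(3) hT] by blast
      qed
      then show "grass_adj k X Y" using gadj_iff[OF mX(1) mY(1)] by blast
    qed
    then show "clique G (grass_adj k) (M1 \<union> M2)" using sub unfolding clique_def by blast
  qed
  have CG: "clique G (grass_adj k) C"
    using Csub fJ Ccl unfolding clique_def by blast
  define AA where "AA = {D. clique G (grass_adj k) D \<and> C \<subseteq> D}"
  have "\<exists>M\<in>AA. \<forall>X\<in>AA. M \<subseteq> X \<longrightarrow> X = M"
  proof (rule subset_Zorn_nonempty)
    show "AA \<noteq> {}" using CG unfolding AA_def by blast
  next
    fix Ch assume ne: "Ch \<noteq> {}" and ch: "subset.chain AA Ch"
    have chA: "Ch \<subseteq> AA" and lin: "\<And>X Y. X \<in> Ch \<Longrightarrow> Y \<in> Ch \<Longrightarrow> X \<subseteq> Y \<or> Y \<subseteq> X"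
      using ch unfolding subset.chain_def by auto
    have "\<Union>Ch \<subseteq> G" using chA unfolding AA_def clique_def by blast
    moreover have "C \<subseteq> \<Union>Ch" using ne chA unfolding AA_def by blast
    moreover have "\<forall>x\<in>\<Union>Ch. \<forall>y\<in>\<Union>Ch. x \<noteq> y \<longrightarrow> grass_adj k x y"
    proof (intro ballI impI)
      fix x y assume "x \<in> \<Union>Ch" "y \<in> \<Union>Ch" "x \<noteq> y"
      then obtain D1 D2 where D: "D1 \<in> Ch" "D2 \<in> Ch" "x \<in> D1" "y \<in> D2" by blast
      then have "D1 \<subseteq> D2 \<or> D2 \<subseteq> D1" using lin by blast
      moreover have "clique G (grass_adj k) D1" "clique G (grass_adj k) D2" using D chA unfolding AA_def by blast+
      ultimately show "grass_adj k x y" using D \<open>x \<noteq> y\<close> unfolding clique_def by blast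
    qed
    ultimately show "\<Union>Ch \<in> AA" unfolding AA_def clique_def by blast
  qed
  then obtain M where M: "M \<in> AA" "\<And>X. X \<in> AA \<Longrightarrow> M \<subseteq> X \<Longrightarrow> X = M" by blast
  have Mmax: "maximal_clique G (grass_adj k) M"
    unfolding maximal_clique_def
  proof (intro conjI allI impI)
    show "clique G (grass_adj k) M" using M(1) unfolding AA_def by blast
    fix D assume "clique G (grass_adj k) D \<and> M \<subseteq> D"
    moreover have "C \<subseteq> M" using M(1) unfolding AA_def by blast
    ultimately have "D \<in> AA" unfolding AA_def by blast
    then show "D = M" using M(2) \<open>clique G (grass_adj k) D \<and> M \<subseteq> D\<close> by blast
  qed
  have CM: "C \<subseteq> M" using M(1) unfolding AA_def by blast
  show ?thesis unfolding G_def[symmetric]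
  proof (rule ex1I[of _ M])
    show "maximal_clique G (grass_adj k) M \<and> C \<subseteq> M" using Mmax CM by blast
  next
    fix M2 assume a: "maximal_clique G (grass_adj k) M2 \<and> C \<subseteq> M2"
    have c1: "clique G (grass_adj k) M" "clique G (grass_adj k) M2" using Mmax a unfolding maximal_clique_def by blast+
    have U: "clique G (grass_adj k) (M \<union> M2)" using union_clique[OF c1(1) CM c1(2)] a by blast
    have "M \<union> M2 = M" using Mmax U unfolding maximal_clique_def by blast
    moreover have "M \<union> M2 = M2" using a U unfolding maximal_clique_def by blast
    ultimately show "M2 = M" by simp
  qed
qed


end
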